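(* Let $P=\{x\in\mathbb R^d\mid \langle a_i,x\rangle\le b_i,\ 1\le i\le n\}$ be a $d$-dimensional lattice polytope given by an irredundant system with primitive $a_i\in(\mathbb Z^d)^*$, and let $a_1,\dots,a_m$ be its core normals. Then the vertices of $\operatorname{conv}(a_1,\dots,a_m)$ are exactly $a_1,\dots,a_m$ (i.e., no $a_j$, $1\le j\le m$, is a convex combination of the others).
   Context: For rational $c>0$ the adjoint polytope is $P^{(c)}=\{x\mid \langle a_i,x\rangle\le b_i-c,\ 1\le i\le n\}$ (the system being irredundant with primitive normals). The $\mathbb Q$-codegree is defined by $\operatorname{qcd}(P)^{-1}=\max\{c>0\mid P^{(c)}\neq\emptyset\}$. Put $c_0=\operatorname{qcd}(P)^{-1}$ and $\operatorname{core}P=P^{(c_0)}$. A normal $a_i$ is a core normal if $\langle a_i,y\rangle=b_i-c_0$ for all $y\in\operatorname{core}P$; after relabeling, the core normals are $a_1,\dots,a_m$. *)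

theory Defs
  imports "HOL-Analysis.Analysis"
begin

text \<open>Integral (lattice) vectors in R^d, identified with Z^d and its dual.\<close>
definition integral_vec :: "real ^ 'd \<Rightarrow> bool" where
  "integral_vec x \<longleftrightarrow> (\<forall>i. x $ i \<in> \<int>)"

definition primitive_vec :: "real ^ 'd \<Rightarrow> bool" where
  "primitive_vec a \<longleftrightarrow> a \<noteq> 0 \<and> integral_vec a \<and>
     (\<forall>k::int. k > 1 \<longrightarrow> \<not> integral_vec ((1 / real_of_int k) *\<^sub>R a))"

definition ineq_poly :: "nat \<Rightarrow> (nat \<Rightarrow> real ^ 'd) \<Rightarrow> (nat \<Rightarrow> real) \<Rightarrow> (real ^ 'd) set" where
  "ineq_poly n a b = {x. \<forall>i\<in>{1..n}. a i \<bullet> x \<le> b i}"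

definition lattice_polytope :: "(real ^ 'd) set \<Rightarrow> bool" where
  "lattice_polytope P \<longleftrightarrow> (\<exists>V. finite V \<and> (\<forall>v\<in>V. integral_vec v) \<and> P = convex hull V)"

definition irredundant :: "nat \<Rightarrow> (nat \<Rightarrow> real ^ 'd) \<Rightarrow> (nat \<Rightarrow> real) \<Rightarrow> bool" where
  "irredundant n a b \<longleftrightarrow>
     (\<forall>i\<in>{1..n}. {x. \<forall>j\<in>{1..n} - {i}. a j \<bullet> x \<le> b j} \<noteq> ineq_poly n a b)"

definition adjoint_poly :: "nat \<Rightarrow> (nat \<Rightarrow> real ^ 'd) \<Rightarrow> (nat \<Rightarrow> real) \<Rightarrow> real \<Rightarrow> (real ^ 'd) set" where
  "adjoint_poly n a b c = {x. \<forall>i\<in>{1..n}. a i \<bullet> x \<le> b i - c}"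

definition qcd_inv :: "nat \<Rightarrow> (nat \<Rightarrow> real ^ 'd) \<Rightarrow> (nat \<Rightarrow> real) \<Rightarrow> real" where
  "qcd_inv n a b = Sup {c. c > 0 \<and> adjoint_poly n a b c \<noteq> {}}"

definition core_poly :: "nat \<Rightarrow> (nat \<Rightarrow> real ^ 'd) \<Rightarrow> (nat \<Rightarrow> real) \<Rightarrow> (real ^ 'd) set" where
  "core_poly n a b = adjoint_poly n a b (qcd_inv n a b)"

definition core_normals :: "nat \<Rightarrow> (nat \<Rightarrow> real ^ 'd) \<Rightarrow> (nat \<Rightarrow> real) \<Rightarrow> nat set" where
  "core_normals n a b =
     {i\<in>{1..n}. \<forall>y\<in>core_poly n a b. a i \<bullet> y = b i - qcd_inv n a b}"

end

theory Submission
  imports Defs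
begin

lemma cont_Min:
  fixes g :: "nat \<Rightarrow> real ^ 'd \<Rightarrow> real"
  assumes "finite I" "I \<noteq> {}" "\<And>i. i \<in> I \<Longrightarrow> continuous_on S (g i)"
  shows "continuous_on S (\<lambda>x. Min ((\<lambda>i. g i x) ` I))"
  using assms
proof (induction I rule: finite_ne_induct)
  case (singleton x)
  then show ?case by simp
next
  case (insert x F)
  have "continuous_on S (\<lambda>y. min (g x y) (Min ((\<lambda>i. g i y) ` F)))"
    using insert by (intro continuous_on_min) auto
  moreover have "\<And>y. Min ((\<lambda>i. g i y) ` insert x F) = min (g x y) (Min ((\<lambda>i. g i y) ` F))"
    using insert by (simp add: Min_insert)
  ultimately show ?case by simp
qed

theorem lemma3p5:
  fixes n :: nat and a :: "nat \<Rightarrow> real ^ 'd" and b :: "nat \<Rightarrow> real"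
  assumes "lattice_polytope (ineq_poly n a b)"
    and "aff_dim (ineq_poly n a b) = int CARD('d)"
    and "irredundant n a b"
    and "\<forall>i\<in>{1..n}. primitive_vec (a i)"
  shows "{v. v extreme_point_of convex hull (a ` core_normals n a b)} = a ` core_normals n a b"
proof (cases "n = 0")
  case True
  then have "core_normals n a b = {}" by (simp add: core_normals_def)
  then show ?thesis by simp
next
  case False
  define P where "P = ineq_poly n a b"
  define I where "I = {1..n}"
  have In: "finite I" "I \<noteq> {}" using False by (auto simp: I_def)
  define f where "f = (\<lambda>x. Min ((\<lambda>i. b i - a i \<bullet> x) ` I))"
  have fge: "c \<le> f x \<longleftrightarrow> (\<forall>i\<in>I. c \<le> b i - a i \<bullet> x)" for c x
    unfolding f_def using In by (simp add: Min_ge_iff)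
  obtain V where V: "finite V" "P = convex hull V"
    using assms(1) unfolding lattice_polytope_def P_def by blast
  have cP: "compact P" using V by (simp add: compact_convex_hull finite_imp_compact)
  have cvP: "convex P" using V by simp
  have affP: "affine hull P = UNIV"
    using assms(2) aff_dim_eq_full[of P] by (simp add: P_def)
  have "P \<noteq> {}" using assms(2) unfolding P_def by auto
  then have "rel_interior P \<noteq> {}" using rel_interior_eq_empty[OF cvP] by simp
  then have "interior P \<noteq> {}" using rel_interior_interior[OF affP] by simp
  then obtain x0 where x0: "x0 \<in> interior P" by blast
  then obtain e where e: "e > 0" "ball x0 e \<subseteq> P" using mem_interior by blast
  have x0P: "x0 \<in> P" using x0 interior_subset by blast
  have pos0: "f x0 > 0"
  proof -
    have "\<forall>i\<in>I. e/2 * norm (a i) \<le> b i - a i \<bullet> x0"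
    proof
      fix i assume i: "i \<in> I"
      have an: "a i \<noteq> 0" using assms(4) i by (simp add: I_def primitive_vec_def)
      let ?z = "x0 + (e/2 / norm (a i)) *\<^sub>R a i"
      have "dist x0 ?z = e/2" using an e by (simp add: dist_norm)
      then have "?z \<in> P" using e by auto
      then have "a i \<bullet> ?z \<le> b i" using i by (simp add: P_def ineq_poly_def I_def)
      moreover have "a i \<bullet> ?z = a i \<bullet> x0 + e/2 * norm (a i)"
        using an by (simp add: inner_add_right power2_norm_eq_inner[symmetric] power2_eq_square)
      ultimately show "e/2 * norm (a i) \<le> b i - a i \<bullet> x0" by simp
    qed
    then have "Min ((\<lambda>i. e/2 * norm (a i)) ` I) \<le> f x0"
      using fge In by (simp add: Min_le_iff) (meson Min_le finite_imageI imageI order_trans)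
    moreover have "Min ((\<lambda>i. e/2 * norm (a i)) ` I) > 0"
      using In e assms(4) by (simp add: Min_gr_iff I_def primitive_vec_def)
    ultimately show ?thesis by simp
  qed
  have "continuous_on P f"
    unfolding f_def using In by (intro cont_Min) (auto intro!: continuous_intros)
  then obtain xs where xs: "xs \<in> P" "\<And>y. y \<in> P \<Longrightarrow> f y \<le> f xs"
    using continuous_attains_sup[OF cP \<open>P \<noteq> {}\<close>] by blast
  have fpos: "f xs > 0" using xs x0P pos0 by force
  have c0: "qcd_inv n a b = f xs"
    unfolding qcd_inv_def
  proof (rule cSup_eq_maximum)
    have "xs \<in> adjoint_poly n a b (f xs)"
      using fge[of "f xs" xs] by (auto simp: adjoint_poly_def I_def)
    then show "f xs \<in> {c. c > 0 \<and> adjoint_poly n a b c \<noteq> {}}" using fpos by auto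
  next
    fix c assume "c \<in> {c. c > 0 \<and> adjoint_poly n a b c \<noteq> {}}"
    then obtain x where c: "c > 0" and x: "\<forall>i\<in>I. a i \<bullet> x \<le> b i - c"
      by (auto simp: adjoint_poly_def I_def)
    have "x \<in> P" using x c by (force simp: P_def ineq_poly_def I_def)
    moreover have "c \<le> f x" using fge x by force
    ultimately show "c \<le> f xs" using xs(2) by force
  qed
  have xscore: "xs \<in> core_poly n a b"
    using fge[of "f xs" xs] c0 by (auto simp: core_poly_def adjoint_poly_def I_def)
  define C where "C = core_normals n a b"
  have CI: "C \<subseteq> I" by (auto simp: C_def core_normals_def I_def)
  have Cb: "\<And>k. k \<in> C \<Longrightarrow> b k = a k \<bullet> xs + f xs"
    using xscore c0 by (auto simp: C_def core_normals_def)
  have "\<forall>v\<in>a ` C. v \<notin> convex hull (a ` C - {v})"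
  proof (rule ballI, rule notI)
    fix v assume "v \<in> a ` C" and vh: "v \<in> convex hull (a ` C - {v})"
    then obtain j where j: "j \<in> C" "v = a j" by blast
    define W where "W = a ` C - {v}"
    have fW: "finite W" using In CI finite_subset unfolding W_def by blast
    obtain u where u: "\<forall>w\<in>W. 0 \<le> u w" "sum u W = 1" "(\<Sum>w\<in>W. u w *\<^sub>R w) = v"
      using vh convex_hull_finite[OF fW] unfolding W_def by auto
    have "{x. \<forall>k\<in>{1..n} - {j}. a k \<bullet> x \<le> b k} = ineq_poly n a b"
    proof
      show "ineq_poly n a b \<subseteq> {x. \<forall>k\<in>{1..n} - {j}. a k \<bullet> x \<le> b k}"
        by (auto simp: ineq_poly_def)
    next
      show "{x. \<forall>k\<in>{1..n} - {j}. a k \<bullet> x \<le> b k} \<subseteq> ineq_poly n a b"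
      proof
        fix x assume x: "x \<in> {x. \<forall>k\<in>{1..n} - {j}. a k \<bullet> x \<le> b k}"
        have wle: "w \<bullet> x \<le> w \<bullet> xs + f xs" if wW: "w \<in> W" for w
        proof -
          obtain k where k: "k \<in> C" "w = a k" "a k \<noteq> a j" using wW j unfolding W_def by blast
          then have "k \<noteq> j" by auto
          then have "a k \<bullet> x \<le> b k" using x k CI by (auto simp: I_def)
          then show ?thesis using Cb[OF k(1)] k by simp
        qed
        have "a j \<bullet> x = (\<Sum>w\<in>W. u w *\<^sub>R w) \<bullet> x" using u(3) j by simp
        also have "\<dots> = (\<Sum>w\<in>W. u w * (w \<bullet> x))" by (simp add: inner_sum_left)
        also have "\<dots> \<le> (\<Sum>w\<in>W. u w * (w \<bullet> xs + f xs))"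
          using u(1) wle by (intro sum_mono mult_left_mono) auto
        also have "\<dots> = (\<Sum>w\<in>W. u w * (w \<bullet> xs)) + f xs * sum u W"
          by (simp add: algebra_simps sum.distrib sum_distrib_left)
        also have "\<dots> = (\<Sum>w\<in>W. u w *\<^sub>R w) \<bullet> xs + f xs"
          using u(2) by (simp add: inner_sum_left)
        also have "\<dots> = a j \<bullet> xs + f xs" using u(3) j by simp
        also have "\<dots> = b j" using Cb[OF j(1)] by simp
        finally have "a j \<bullet> x \<le> b j" .
        then show "x \<in> ineq_poly n a b" using x by (auto simp: ineq_poly_def)
      qed
    qed
    moreover have "j \<in> {1..n}" using j CI by (auto simp: I_def)
    ultimately show False using assms(3) unfolding irredundant_def by blast
  qed
  moreover have "compact (a ` C)" using In CI finite_subset by (blast intro: finite_imp_compact)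
  ultimately show ?thesis
    using extreme_point_of_convex_hull_convex_independent unfolding C_def by blast
qed

end
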